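(* Let $S=\{R_0,\dots,R_d\}$ be a quasi-thin scheme on $X$, $\mathbb F$ a field, $x\in X$, $\mathcal T=\mathcal T(x)$, $E_a^*=E_a^*(x)$, and fix a total order $\preceq$ on $X$. Let $\mathcal U=\{(g,h):k_g=k_h=|R_{g'}R_h|=2\}\cup\{(g,h):(g,h)\text{ is a bad pair of }S\}$. For $(i,j)\in\mathcal U$ write $xR_i=\{u_1,u_2\}$, $xR_j=\{v_1,v_2\}$ with $u_1\prec u_2$, $v_1\prec v_2$, and set $B_{ij}=E_{u_1v_1}+E_{u_2v_2}$. Then $$\mathcal B=\{B_{ij}:(i,j)\in\mathcal U\}\cup\{E_y^*JE_z^*:R_y,R_z\in S\}$$ is an $\mathbb F$-basis of $\mathcal T$.
   Context: Let $X$ be a nonempty finite set. A scheme of class $d$ on $X$ is a partition $S=\{R_0,\dots,R_d\}$ of $X\times X$ into nonempty sets such that $R_0=\{(b,b):b\in X\}$; for each $c$ there is $c'$ with $R_{c'}=\{(f,e):(e,f)\in R_c\}$; and for all $i,j,k$ the intersection number $p_{ij}^k=|\{\ell\in X:(m,\ell)\in R_i,(\ell,n)\in R_j\}|$ does not depend on $(m,n)\in R_k$. The valency is $k_a=p_{aa'}^0$; quasi-thin means all $k_a\le 2$. Complex product: $R_aR_b=\{R_c:p_{ab}^c>0\}$. For $y\in X$, $yR_a=\{z:(y,z)\in R_a\}$. $A_a\in M_X(\mathbb F)$ is the $(0,1)$ adjacency matrix of $R_a$, $E_a^*(y)$ is the diagonal $(0,1)$-matrix with ones exactly at positions indexed by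 $yR_a$, $E_{uv}$ is the matrix unit at $(u,v)$, $J$ is the all-ones matrix. The Terwilliger $\mathbb F$-algebra $\mathcal T(y)$ is the $\mathbb F$-subalgebra of $M_X(\mathbb F)$ generated by $A_0,\dots,A_d,E_0^*(y),\dots,E_d^*(y)$. Bad pair: $(u,v)$ is a bad pair of $S$ if there exist an integer $a\ge1$ and $R_{i_b},R_{j_b},R_{\ell_b}\in S$ ($b=0,\dots,a$) with $i_0=u$, $\ell_a=v$, $k_{i_b}=k_{\ell_b}=2$ and $p_{i_bj_b}^{\ell_b}=1$ for all $b$, $\ell_c=i_{c+1}$ for $0\le c\le a-1$, and $|R_{u'}R_v|=1$. (For $(i,j)\in\mathcal U$ one has $k_i=k_j=2$.) *)

theory Defs
  imports Complex_Main "HOL-Library.Function_Algebras"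
begin

text \<open>The finite set X is the universe of a finite type 'a. Matrices in M_X(F) are
functions 'a => 'a => 'f. A scheme of class d is a family R 0, ..., R d of relations.\<close>

definition is_scheme :: "nat \<Rightarrow> (nat \<Rightarrow> ('a::finite \<times> 'a) set) \<Rightarrow> bool" where
  "is_scheme d R \<longleftrightarrow>
     (\<forall>i\<le>d. R i \<noteq> {}) \<and>
     (\<forall>p. \<exists>!i. i \<le> d \<and> p \<in> R i) \<and>
     R 0 = {(b, b) | b. True} \<and>
     (\<forall>c\<le>d. \<exists>c'\<le>d. R c' = {(f, e). (e, f) \<in> R c}) \<and>
     (\<forall>i\<le>d. \<forall>j\<le>d. \<forall>k\<le>d. \<forall>m n m2 n2. (m, n) \<in> R k \<longrightarrow> (m2, n2) \<in> R k \<longrightarrow>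
        card {l. (m, l) \<in> R i \<and> (l, n) \<in> R j} = card {l. (m2, l) \<in> R i \<and> (l, n2) \<in> R j})"

definition inum :: "(nat \<Rightarrow> ('a::finite \<times> 'a) set) \<Rightarrow> nat \<Rightarrow> nat \<Rightarrow> nat \<Rightarrow> nat" where
  "inum R i j k = (let (m, n) = (SOME q. q \<in> R k) in card {l. (m, l) \<in> R i \<and> (l, n) \<in> R j})"

definition conv_idx :: "nat \<Rightarrow> (nat \<Rightarrow> ('a \<times> 'a) set) \<Rightarrow> nat \<Rightarrow> nat" where
  "conv_idx d R c = (THE c'. c' \<le> d \<and> R c' = {(f, e). (e, f) \<in> R c})"

definition valency :: "nat \<Rightarrow> (nat \<Rightarrow> ('a::finite \<times> 'a) set) \<Rightarrow> nat \<Rightarrow> nat" where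
  "valency d R a = inum R a (conv_idx d R a) 0"

definition quasi_thin :: "nat \<Rightarrow> (nat \<Rightarrow> ('a::finite \<times> 'a) set) \<Rightarrow> bool" where
  "quasi_thin d R \<longleftrightarrow> (\<forall>a\<le>d. valency d R a \<le> 2)"

text \<open>Complex product R_a R_b, represented by the set of indices c of its members.\<close>
definition cprod :: "nat \<Rightarrow> (nat \<Rightarrow> ('a::finite \<times> 'a) set) \<Rightarrow> nat \<Rightarrow> nat \<Rightarrow> nat set" where
  "cprod d R a b = {c. c \<le> d \<and> inum R a b c > 0}"

definition bad_pair :: "nat \<Rightarrow> (nat \<Rightarrow> ('a::finite \<times> 'a) set) \<Rightarrow> nat \<Rightarrow> nat \<Rightarrow> bool" where
  "bad_pair d R u v \<longleftrightarrow>
     (\<exists>(a::nat) (ii::nat \<Rightarrow> nat) (jj::nat \<Rightarrow> nat) (ll::nat \<Rightarrow> nat). a \<ge> 1 \<and>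
        (\<forall>b\<le>a. ii b \<le> d \<and> jj b \<le> d \<and> ll b \<le> d) \<and>
        ii 0 = u \<and> ll a = v \<and>
        (\<forall>b\<le>a. valency d R (ii b) = 2 \<and> valency d R (ll b) = 2 \<and> inum R (ii b) (jj b) (ll b) = 1) \<and>
        (\<forall>c<a. ll c = ii (Suc c))) \<and>
     card (cprod d R (conv_idx d R u) v) = 1"

definition calU :: "nat \<Rightarrow> (nat \<Rightarrow> ('a::finite \<times> 'a) set) \<Rightarrow> (nat \<times> nat) set" where
  "calU d R =
     {(g, h). g \<le> d \<and> h \<le> d \<and> valency d R g = 2 \<and> valency d R h = 2 \<and>
              card (cprod d R (conv_idx d R g) h) = 2}
     \<union> {(g, h). g \<le> d \<and> h \<le> d \<and> bad_pair d R g h}"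

definition mmult :: "('a::finite \<Rightarrow> 'a \<Rightarrow> 'f::field) \<Rightarrow> ('a \<Rightarrow> 'a \<Rightarrow> 'f) \<Rightarrow> 'a \<Rightarrow> 'a \<Rightarrow> 'f" where
  "mmult M N = (\<lambda>u v. \<Sum>w\<in>UNIV. M u w * N w v)"

definition msmult :: "'f::field \<Rightarrow> ('a \<Rightarrow> 'a \<Rightarrow> 'f) \<Rightarrow> 'a \<Rightarrow> 'a \<Rightarrow> 'f" where
  "msmult c M = (\<lambda>u v. c * M u v)"

definition adj :: "(nat \<Rightarrow> ('a \<times> 'a) set) \<Rightarrow> nat \<Rightarrow> 'a \<Rightarrow> 'a \<Rightarrow> 'f::field" where
  "adj R a = (\<lambda>u v. if (u, v) \<in> R a then 1 else 0)"

definition dual_idem :: "(nat \<Rightarrow> ('a \<times> 'a) set) \<Rightarrow> 'a \<Rightarrow> nat \<Rightarrow> 'a \<Rightarrow> 'a \<Rightarrow> 'f::field" where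
  "dual_idem R y a = (\<lambda>u v. if u = v \<and> (y, u) \<in> R a then 1 else 0)"

definition munit :: "'a \<Rightarrow> 'a \<Rightarrow> 'a \<Rightarrow> 'a \<Rightarrow> 'f::field" where
  "munit a b = (\<lambda>u v. if u = a \<and> v = b then 1 else 0)"

definition allones :: "'a \<Rightarrow> 'a \<Rightarrow> 'f::field" where
  "allones = (\<lambda>u v. 1)"

inductive_set gen_alg :: "('a::finite \<Rightarrow> 'a \<Rightarrow> 'f::field) set \<Rightarrow> ('a \<Rightarrow> 'a \<Rightarrow> 'f) set"
  for G where
  gen: "M \<in> G \<Longrightarrow> M \<in> gen_alg G"
| one: "munit_diag \<in> gen_alg G" if "munit_diag = (\<lambda>u v. if u = v then 1 else 0)"
| add: "M \<in> gen_alg G \<Longrightarrow> N \<in> gen_alg G \<Longrightarrow> M + N \<in> gen_alg G"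
| smult: "M \<in> gen_alg G \<Longrightarrow> msmult c M \<in> gen_alg G"
| mult: "M \<in> gen_alg G \<Longrightarrow> N \<in> gen_alg G \<Longrightarrow> mmult M N \<in> gen_alg G"

definition terwilliger :: "nat \<Rightarrow> (nat \<Rightarrow> ('a::finite \<times> 'a) set) \<Rightarrow> 'a \<Rightarrow> ('a \<Rightarrow> 'a \<Rightarrow> 'f::field) set" where
  "terwilliger d R y = gen_alg ({adj R a | a. a \<le> d} \<union> {dual_idem R y a | a. a \<le> d})"

definition rmin :: "'a rel \<Rightarrow> 'a set \<Rightarrow> 'a" where
  "rmin r A = (THE u. u \<in> A \<and> (\<forall>w\<in>A. (u, w) \<in> r))"

definition rmax :: "'a rel \<Rightarrow> 'a set \<Rightarrow> 'a" where
  "rmax r A = (THE u. u \<in> A \<and> (\<forall>w\<in>A. (w, u) \<in> r))"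

definition Bmat :: "'a rel \<Rightarrow> (nat \<Rightarrow> ('a \<times> 'a) set) \<Rightarrow> 'a \<Rightarrow> nat \<Rightarrow> nat \<Rightarrow> 'a \<Rightarrow> 'a \<Rightarrow> 'f::field" where
  "Bmat r R x i j =
     munit (rmin r {z. (x, z) \<in> R i}) (rmin r {z. (x, z) \<in> R j})
   + munit (rmax r {z. (x, z) \<in> R i}) (rmax r {z. (x, z) \<in> R j})"

end

theory Submission
  imports Defs
begin

lemma sum_fun_apply2: "(\<Sum>i\<in>A. f i) u = (\<Sum>i\<in>A. f i u)"
  by (induct A rule: infinite_finite_induct) auto

lemma msmult_module: "module (msmult :: 'f::field \<Rightarrow> ('a \<Rightarrow> 'a \<Rightarrow> 'f) \<Rightarrow> _)"
  by unfold_locales (auto simp: msmult_def fun_eq_iff algebra_simps)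

locale qts =
  fixes d :: nat and R :: "nat \<Rightarrow> ('a::finite \<times> 'a) set" and x :: 'a and r :: "'a rel"
  assumes sch: "is_scheme d R" and qt: "quasi_thin d R" and lin: "linear_order_on UNIV r"
begin

lemma nonempty: "i \<le> d \<Longrightarrow> R i \<noteq> {}" using sch by (simp add: is_scheme_def)
lemma part1: "\<exists>!i. i \<le> d \<and> p \<in> R i" using sch unfolding is_scheme_def by (cases p) simp
lemma part_ex: "\<exists>i\<le>d. p \<in> R i" using part1[of p] by (meson ex1_implies_ex)
lemma part_un: "i \<le> d \<Longrightarrow> j \<le> d \<Longrightarrow> p \<in> R i \<Longrightarrow> p \<in> R j \<Longrightarrow> i = j"
  using part1[of p] by (metis (no_types, lifting))
lemma R0: "R 0 = {(b, b) | b. True}" using sch by (simp add: is_scheme_def)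
lemma reg_all: "\<forall>i\<le>d. \<forall>j\<le>d. \<forall>k\<le>d. \<forall>m n m2 n2. (m, n) \<in> R k \<longrightarrow> (m2, n2) \<in> R k \<longrightarrow>
        card {l. (m, l) \<in> R i \<and> (l, n) \<in> R j} = card {l. (m2, l) \<in> R i \<and> (l, n2) \<in> R j}"
  using sch unfolding is_scheme_def by (elim conjE) assumption
lemma reg: "i \<le> d \<Longrightarrow> j \<le> d \<Longrightarrow> k \<le> d \<Longrightarrow> (m, n) \<in> R k \<Longrightarrow> (m2, n2) \<in> R k \<Longrightarrow>
        card {l. (m, l) \<in> R i \<and> (l, n) \<in> R j} = card {l. (m2, l) \<in> R i \<and> (l, n2) \<in> R j}"
  using reg_all by blast
lemma conv_all: "\<forall>c\<le>d. \<exists>c'\<le>d. R c' = {(f, e). (e, f) \<in> R c}"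
  using sch unfolding is_scheme_def by (elim conjE) assumption

lemma conv: assumes "c \<le> d" shows "conv_idx d R c \<le> d \<and> R (conv_idx d R c) = {(f, e). (e, f) \<in> R c}"
proof -
  obtain c' where c': "c' \<le> d" "R c' = {(f, e). (e, f) \<in> R c}"
    using conv_all assms by blast
  have "conv_idx d R c = c'" unfolding conv_idx_def
  proof (rule the_equality)
    show "c' \<le> d \<and> R c' = {(f, e). (e, f) \<in> R c}" using c' by simp
    fix c'' assume h: "c'' \<le> d \<and> R c'' = {(f, e). (e, f) \<in> R c}"
    obtain p where "p \<in> R c'" using nonempty c' by blast
    then show "c'' = c'" using h c' part_un by metis
  qed
  then show ?thesis using c' by simp
qed

lemma conv_le: "c \<le> d \<Longrightarrow> conv_idx d R c \<le> d" using conv by blast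
lemma conv_mem: "c \<le> d \<Longrightarrow> (u, v) \<in> R (conv_idx d R c) \<longleftrightarrow> (v, u) \<in> R c" using conv by blast

lemma inum_eq: assumes "i \<le> d" "j \<le> d" "k \<le> d" "(m, n) \<in> R k"
  shows "inum R i j k = card {l. (m, l) \<in> R i \<and> (l, n) \<in> R j}"
proof -
  have "\<exists>q. q \<in> R k" using assms by blast
  then have s: "(SOME q. q \<in> R k) \<in> R k" by (rule someI_ex)
  obtain m2 n2 where e: "(SOME q. q \<in> R k) = (m2, n2)" by fastforce
  show ?thesis unfolding inum_def e using reg[OF assms(1-3) assms(4), of m2 n2] s e by simp
qed

definition Xs where "Xs a = {z. (x, z) \<in> R a}"

lemma valency_card: assumes "a \<le> d" shows "valency d R a = card (Xs a)"
proof -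
  have "(x, x) \<in> R 0" using R0 by auto
  then have "valency d R a = card {l. (x, l) \<in> R a \<and> (l, x) \<in> R (conv_idx d R a)}"
    unfolding valency_def using inum_eq[OF assms conv_le[OF assms]] by simp
  also have "\<dots> = card (Xs a)" unfolding Xs_def using conv_mem[OF assms] by simp
  finally show ?thesis .
qed

lemma Xs_card: assumes "a \<le> d" shows "card (Xs a) = 1 \<or> card (Xs a) = 2"
proof -
  obtain m n where mn: "(m, n) \<in> R a" using nonempty[OF assms] by auto
  have "(m, m) \<in> R 0" "(x, x) \<in> R 0" using R0 by auto
  then have "card {l. (m, l) \<in> R a \<and> (l, m) \<in> R (conv_idx d R a)} = card {l. (x, l) \<in> R a \<and> (l, x) \<in> R (conv_idx d R a)}"
    using reg[of a "conv_idx d R a" 0 m m x x] assms conv_le[OF assms] by simp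
  then have e: "card {l. (m, l) \<in> R a} = card (Xs a)" unfolding Xs_def using conv_mem[OF assms] by simp
  have "n \<in> {l. (m, l) \<in> R a}" using mn by simp
  then have "{l. (m, l) \<in> R a} \<noteq> {}" by blast
  then have "card {l. (m, l) \<in> R a} \<ge> 1" by (simp add: Suc_le_eq card_gt_0_iff)
  moreover have "card (Xs a) \<le> 2" using qt assms valency_card unfolding quasi_thin_def by auto
  ultimately show ?thesis using e by linarith
qed

lemma Xs_finite[simp]: "finite (Xs a)" by simp

definition cls where "cls z = (THE a. a \<le> d \<and> (x, z) \<in> R a)"

lemma cls: "cls z \<le> d \<and> z \<in> Xs (cls z)"
proof -
  obtain a where "a \<le> d" "(x, z) \<in> R a" using part_ex by blast
  then have "cls z = a" unfolding cls_def using part_un by (intro the_equality) auto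
  then show ?thesis using \<open>a \<le> d\<close> \<open>(x, z) \<in> R a\<close> by (simp add: Xs_def)
qed

lemma cls_eq: "a \<le> d \<Longrightarrow> z \<in> Xs a \<Longrightarrow> cls z = a"
  using cls part_un unfolding Xs_def by blast


lemma lin_refl: "(z, z) \<in> r"
  using lin unfolding linear_order_on_def partial_order_on_def preorder_on_def refl_on_def by auto
lemma lin_total: "(z, w) \<in> r \<or> (w, z) \<in> r"
  using lin lin_refl[of z] unfolding linear_order_on_def total_on_def by (cases "z = w") auto
lemma lin_anti: "(z, w) \<in> r \<Longrightarrow> (w, z) \<in> r \<Longrightarrow> z = w"
  using lin unfolding linear_order_on_def partial_order_on_def antisym_def by auto

lemma rmin_pair: "(u, v) \<in> r \<Longrightarrow> rmin r {u, v} = u"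
  unfolding rmin_def using lin_refl lin_anti by (intro the_equality) auto
lemma rmax_pair: "(u, v) \<in> r \<Longrightarrow> rmax r {u, v} = v"
  unfolding rmax_def using lin_refl lin_anti by (intro the_equality) auto

lemma rminmax2: assumes "card A = 2"
  shows "A = {rmin r A, rmax r A} \<and> rmin r A \<noteq> rmax r A"
proof -
  obtain u v where A: "A = {u, v}" "u \<noteq> v" using assms unfolding card_2_iff by blast
  show ?thesis
  proof (cases "(u, v) \<in> r")
    case True then have "rmin r A = u" "rmax r A = v" unfolding A(1) by (rule rmin_pair, rule rmax_pair)
    then show ?thesis using A by auto
  next
    case False then have "(v, u) \<in> r" using lin_total by blast
    moreover have "A = {v, u}" using A by blast
    ultimately have "rmin r A = v" "rmax r A = u" by (metis rmin_pair, metis rmax_pair)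
    then show ?thesis using A by auto
  qed
qed

lemma rmin1: assumes "card A = 1" shows "A = {rmin r A}"
proof -
  obtain u where A: "A = {u}" using assms by (rule card_1_singletonE)
  have "rmin r {u, u} = u" by (rule rmin_pair[OF lin_refl])
  then show ?thesis using A by simp
qed

definition lo where "lo a = rmin r (Xs a)"
definition hi where "hi a = rmax r (Xs a)"
definition lowp where "lowp z \<longleftrightarrow> z = lo (cls z)"

lemma Xs2: "card (Xs a) = 2 \<Longrightarrow> Xs a = {lo a, hi a} \<and> lo a \<noteq> hi a"
  unfolding lo_def hi_def by (rule rminmax2)
lemma Xs1: "card (Xs a) = 1 \<Longrightarrow> Xs a = {lo a}"
  unfolding lo_def by (rule rmin1)
lemma lo_in: "a \<le> d \<Longrightarrow> lo a \<in> Xs a"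
  using Xs_card Xs1 Xs2 by (metis insertI1)
lemma hi_in: "card (Xs a) = 2 \<Longrightarrow> hi a \<in> Xs a"
  using Xs2 by blast
lemma Xs_ne: "a \<le> d \<Longrightarrow> Xs a \<noteq> {}"
  using lo_in by blast

lemma card_one_pred: "card {z. z \<in> {u} \<and> P z} = (if P u then 1 else 0)"
proof (cases "P u")
  case True then have "{z. z \<in> {u} \<and> P z} = {u}" by auto
  then show ?thesis using True by simp
qed simp
lemma card_two_pred: "u1 \<noteq> u2 \<Longrightarrow> card {z. z \<in> {u1, u2} \<and> P z} = (if P u1 then 1 else 0) + (if P u2 then 1 else 0)"
proof (cases "P u1"; cases "P u2")
  assume "u1 \<noteq> u2" "P u1" "P u2"
  then have "{z. z \<in> {u1, u2} \<and> P z} = {u1, u2}" by auto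
  then show ?thesis using \<open>u1 \<noteq> u2\<close> \<open>P u1\<close> \<open>P u2\<close> by simp
next
  assume "u1 \<noteq> u2" "P u1" "\<not> P u2"
  then have "{z. z \<in> {u1, u2} \<and> P z} = {u1}" by auto
  then show ?thesis using \<open>P u1\<close> \<open>\<not> P u2\<close> by simp
next
  assume "u1 \<noteq> u2" "\<not> P u1" "P u2"
  then have "{z. z \<in> {u1, u2} \<and> P z} = {u2}" by auto
  then show ?thesis using \<open>\<not> P u1\<close> \<open>P u2\<close> by simp
next
  assume "u1 \<noteq> u2" "\<not> P u1" "\<not> P u2"
  then have "{z. z \<in> {u1, u2} \<and> P z} = {}" by auto
  then show ?thesis using \<open>\<not> P u1\<close> \<open>\<not> P u2\<close> by simp
qed

lemma row_const: assumes "a \<le> d" "b \<le> d" "e \<le> d" "u \<in> Xs a" "u' \<in> Xs a"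
  shows "card {v. v \<in> Xs b \<and> (u, v) \<in> R e} = card {v. v \<in> Xs b \<and> (u', v) \<in> R e}"
  using reg[of b "conv_idx d R e" a x u x u'] assms conv_le[of e] conv_mem[of e]
  unfolding Xs_def by simp

lemma col_const: assumes "a \<le> d" "b \<le> d" "e \<le> d" "v \<in> Xs b" "v' \<in> Xs b"
  shows "card {u. u \<in> Xs a \<and> (u, v) \<in> R e} = card {u. u \<in> Xs a \<and> (u, v') \<in> R e}"
  using reg[of a e b x v x v'] assms unfolding Xs_def by simp

lemma sq: assumes "a \<le> d" "b \<le> d" "e \<le> d" "card (Xs a) = 2" "card (Xs b) = 2"
  shows "((lo a, lo b) \<in> R e \<longleftrightarrow> (hi a, hi b) \<in> R e) \<and> ((lo a, hi b) \<in> R e \<longleftrightarrow> (hi a, lo b) \<in> R e)"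
proof -
  have A: "Xs a = {lo a, hi a}" "lo a \<noteq> hi a" and B: "Xs b = {lo b, hi b}" "lo b \<noteq> hi b"
    using Xs2 assms by auto
  have r1: "card {v. v \<in> Xs b \<and> (lo a, v) \<in> R e} = card {v. v \<in> Xs b \<and> (hi a, v) \<in> R e}"
    using row_const assms A by auto
  have c1: "card {u. u \<in> Xs a \<and> (u, lo b) \<in> R e} = card {u. u \<in> Xs a \<and> (u, hi b) \<in> R e}"
    using col_const assms B by auto
  from r1 c1 show ?thesis unfolding A(1) B(1) card_two_pred[OF A(2)] card_two_pred[OF B(2)]
    by (auto split: if_splits)
qed

lemma cprod_char: assumes "a \<le> d" "b \<le> d"
  shows "cprod d R (conv_idx d R a) b = {e. e \<le> d \<and> (\<exists>u\<in>Xs a. \<exists>v\<in>Xs b. (u, v) \<in> R e)}"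
proof -
  have "inum R (conv_idx d R a) b e > 0 \<longleftrightarrow> (\<exists>u\<in>Xs a. \<exists>v\<in>Xs b. (u, v) \<in> R e)" if e: "e \<le> d" for e
  proof
    assume "\<exists>u\<in>Xs a. \<exists>v\<in>Xs b. (u, v) \<in> R e"
    then obtain u v where uv: "u \<in> Xs a" "v \<in> Xs b" "(u, v) \<in> R e" by blast
    have "inum R (conv_idx d R a) b e = card {l. (u, l) \<in> R (conv_idx d R a) \<and> (l, v) \<in> R b}"
      using inum_eq[OF conv_le[OF assms(1)] assms(2) e uv(3)] .
    moreover have "x \<in> {l. (u, l) \<in> R (conv_idx d R a) \<and> (l, v) \<in> R b}"
      using uv conv_mem[OF assms(1)] unfolding Xs_def by simp
    ultimately show "inum R (conv_idx d R a) b e > 0"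
      by (metis card_gt_0_iff empty_iff finite)
  next
    assume pos: "inum R (conv_idx d R a) b e > 0"
    obtain m n where mn: "(m, n) \<in> R e" using nonempty[OF e] by auto
    have "card {l. (m, l) \<in> R (conv_idx d R a) \<and> (l, n) \<in> R b} > 0"
      using pos inum_eq[OF conv_le[OF assms(1)] assms(2) e mn] by simp
    then obtain l where l: "(l, m) \<in> R a" "(l, n) \<in> R b"
      using conv_mem[OF assms(1)] by (metis (no_types, lifting) card.empty empty_Collect_eq less_irrefl)
    obtain v where v: "v \<in> Xs b" using Xs_ne[OF assms(2)] by blast
    have "card {w. (l, w) \<in> R a \<and> (w, n) \<in> R e} = card {w. (x, w) \<in> R a \<and> (w, v) \<in> R e}"
      using reg[of a e b l n x v] assms e l v unfolding Xs_def by simp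
    moreover have "m \<in> {w. (l, w) \<in> R a \<and> (w, n) \<in> R e}" using l mn by simp
    ultimately have "{w. (x, w) \<in> R a \<and> (w, v) \<in> R e} \<noteq> {}"
      by (metis card.empty card_gt_0_iff empty_iff finite)
    then show "\<exists>u\<in>Xs a. \<exists>v\<in>Xs b. (u, v) \<in> R e" using v unfolding Xs_def by blast
  qed
  then show ?thesis unfolding cprod_def by blast
qed

lemma idx: obtains e where "e \<le> d" "p \<in> R e" using part_ex by blast

lemma perm_card2: assumes "a \<le> d" "b \<le> d" "e \<le> d" "card (Xs a) = 2" "card (Xs b) = 2"
    and "((lo a, lo b) \<in> R e) \<noteq> ((lo a, hi b) \<in> R e)"
  shows "card (cprod d R (conv_idx d R a) b) = 2"
proof -
  have A: "Xs a = {lo a, hi a}" "lo a \<noteq> hi a" and B: "Xs b = {lo b, hi b}" "lo b \<noteq> hi b"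
    using Xs2 assms by auto
  obtain e0 where e0: "e0 \<le> d" "(lo a, lo b) \<in> R e0" by (rule idx)
  obtain e1 where e1: "e1 \<le> d" "(lo a, hi b) \<in> R e1" by (rule idx)
  have ne: "e0 \<noteq> e1"
  proof
    assume "e0 = e1"
    then show False using e0 e1 assms(3,6) part_un by metis
  qed
  have s0: "(hi a, hi b) \<in> R e0" using sq[OF assms(1,2) e0(1) assms(4,5)] e0 by blast
  have s1: "(hi a, lo b) \<in> R e1" using sq[OF assms(1,2) e1(1) assms(4,5)] e1 by blast
  have "cprod d R (conv_idx d R a) b = {e0, e1}"
  proof -
    have "f = e0 \<or> f = e1" if f: "f \<le> d" "u \<in> Xs a" "v \<in> Xs b" "(u, v) \<in> R f" for f u v
    proof -
      have "(u, v) \<in> R e0 \<or> (u, v) \<in> R e1" using f(2,3) A B e0 e1 s0 s1 by auto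
      then show ?thesis using part_un f(1,4) e0(1) e1(1) by metis
    qed
    moreover have "lo a \<in> Xs a" "lo b \<in> Xs b" "hi b \<in> Xs b" using A B by auto
    ultimately show ?thesis unfolding cprod_char[OF assms(1,2)] using e0 e1 by blast
  qed
  then show ?thesis using ne by simp
qed

lemma card12: assumes "a \<le> d" "b \<le> d" "card (Xs a) = 2" "card (Xs b) = 2"
  shows "card (cprod d R (conv_idx d R a) b) = 1 \<or> card (cprod d R (conv_idx d R a) b) = 2"
proof -
  have A: "Xs a = {lo a, hi a}" "lo a \<noteq> hi a" and B: "Xs b = {lo b, hi b}" "lo b \<noteq> hi b"
    using Xs2 assms by auto
  obtain e0 where e0: "e0 \<le> d" "(lo a, lo b) \<in> R e0" by (rule idx)
  show ?thesis
  proof (cases "(lo a, hi b) \<in> R e0")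
    case True
    then have all: "(hi a, hi b) \<in> R e0" "(hi a, lo b) \<in> R e0"
      using sq[OF assms(1,2) e0(1) assms(3,4)] e0 by auto
    have "f = e0" if f: "f \<le> d" "u \<in> Xs a" "v \<in> Xs b" "(u, v) \<in> R f" for f u v
    proof -
      have "(u, v) \<in> R e0" using f(2,3) A B e0 True all by auto
      then show ?thesis using part_un f(1,4) e0(1) by metis
    qed
    moreover have "lo a \<in> Xs a" "lo b \<in> Xs b" using A B by auto
    ultimately have "cprod d R (conv_idx d R a) b = {e0}"
      unfolding cprod_char[OF assms(1,2)] using e0 by blast
    then show ?thesis by simp
  next
    case False
    then show ?thesis using perm_card2[OF assms(1,2) e0(1) assms(3,4)] e0 by simp
  qed
qed

lemma perm_U: assumes "a \<le> d" "b \<le> d" "e \<le> d" "card (Xs a) = 2" "card (Xs b) = 2"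
    and "((lo a, lo b) \<in> R e) \<noteq> ((lo a, hi b) \<in> R e)"
  shows "(a, b) \<in> calU d R"
  using perm_card2[OF assms] assms valency_card unfolding calU_def by auto


definition Crel where
  "Crel = {(i, l). i \<le> d \<and> l \<le> d \<and> card (Xs i) = 2 \<and> card (Xs l) = 2 \<and> (\<exists>j\<le>d. inum R i j l = 1)}"

lemma P_Crel: assumes "g \<le> d" "h \<le> d" "card (Xs g) = 2" "card (Xs h) = 2"
    and c2: "card (cprod d R (conv_idx d R g) h) = 2"
  shows "(g, h) \<in> Crel"
proof -
  have A: "Xs g = {lo g, hi g}" "lo g \<noteq> hi g" and B: "Xs h = {lo h, hi h}" "lo h \<noteq> hi h"
    using Xs2 assms by auto
  obtain e0 where e0: "e0 \<le> d" "(lo g, lo h) \<in> R e0" by (rule idx)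
  have n1: "(lo g, hi h) \<notin> R e0"
  proof
    assume True: "(lo g, hi h) \<in> R e0"
    then have all: "(hi g, hi h) \<in> R e0" "(hi g, lo h) \<in> R e0"
      using sq[OF assms(1,2) e0(1) assms(3,4)] e0 by auto
    have "f = e0" if f: "f \<le> d" "u \<in> Xs g" "v \<in> Xs h" "(u, v) \<in> R f" for f u v
    proof -
      have "(u, v) \<in> R e0" using f(2,3) A B e0 True all by auto
      then show ?thesis using part_un f(1,4) e0(1) by metis
    qed
    moreover have "lo g \<in> Xs g" "lo h \<in> Xs h" using A B by auto
    ultimately have "cprod d R (conv_idx d R g) h = {e0}"
      unfolding cprod_char[OF assms(1,2)] using e0 by blast
    then show False using c2 by simp
  qed
  then have n2: "(hi g, lo h) \<notin> R e0" using sq[OF assms(1,2) e0(1) assms(3,4)] by blast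
  have "(x, lo h) \<in> R h" using B unfolding Xs_def by auto
  then have "inum R g e0 h = card {l. (x, l) \<in> R g \<and> (l, lo h) \<in> R e0}"
    using inum_eq[OF assms(1) e0(1) assms(2)] by blast
  also have "\<dots> = card {l. l \<in> Xs g \<and> (l, lo h) \<in> R e0}" unfolding Xs_def by simp
  also have "\<dots> = 1" unfolding A(1) card_two_pred[OF A(2)] using e0 n2 by simp
  finally show ?thesis unfolding Crel_def using assms e0 by blast
qed

lemma valency2: "i \<le> d \<Longrightarrow> valency d R i = 2 \<longleftrightarrow> card (Xs i) = 2"
  using valency_card by simp

lemma bad_Crel: assumes "bad_pair d R u v" shows "(u, v) \<in> Crel\<^sup>+"
proof -
  obtain a ii jj ll where a: "a \<ge> 1" and le: "\<forall>b\<le>a. ii b \<le> d \<and> jj b \<le> d \<and> ll b \<le> d"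
    and e: "ii 0 = u" "ll a = v"
    and v: "\<forall>b\<le>a. valency d R (ii b) = 2 \<and> valency d R (ll b) = 2 \<and> inum R (ii b) (jj b) (ll b) = 1"
    and ch: "\<forall>c<a. ll c = ii (Suc c)"
    using assms unfolding bad_pair_def by blast
  have C: "(ii b, ll b) \<in> Crel" if "b \<le> a" for b
    using le v that valency2 unfolding Crel_def by auto
  have "b \<le> a \<Longrightarrow> (ii 0, ll b) \<in> Crel\<^sup>+" for b
  proof (induction b)
    case 0 then show ?case using C by auto
  next
    case (Suc b)
    then have "(ii 0, ll b) \<in> Crel\<^sup>+" by simp
    moreover have "ll b = ii (Suc b)" using ch Suc.prems by simp
    ultimately show ?case using C[OF Suc.prems] by (metis trancl_into_trancl)
  qed
  then show ?thesis using e by blast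
qed

lemma Crel_refl: assumes "v \<le> d" "card (Xs v) = 2" shows "inum R v 0 v = 1"
proof -
  obtain y where y: "y \<in> Xs v" using Xs_ne[OF assms(1)] by blast
  then have "inum R v 0 v = card {l. (x, l) \<in> R v \<and> (l, y) \<in> R 0}"
    using inum_eq[OF assms(1) _ assms(1)] unfolding Xs_def by simp
  also have "{l. (x, l) \<in> R v \<and> (l, y) \<in> R 0} = {y}" using y R0 unfolding Xs_def by auto
  finally show ?thesis by simp
qed

definition chain where
  "chain u v \<longleftrightarrow> (\<exists>(a::nat) (ii::nat \<Rightarrow> nat) (jj::nat \<Rightarrow> nat) (ll::nat \<Rightarrow> nat). a \<ge> 1 \<and>
        (\<forall>b\<le>a. ii b \<le> d \<and> jj b \<le> d \<and> ll b \<le> d) \<and>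
        ii 0 = u \<and> ll a = v \<and>
        (\<forall>b\<le>a. valency d R (ii b) = 2 \<and> valency d R (ll b) = 2 \<and> inum R (ii b) (jj b) (ll b) = 1) \<and>
        (\<forall>c<a. ll c = ii (Suc c)))"

lemma Crel_chain: assumes "(u, v) \<in> Crel\<^sup>+" shows "chain u v"
  using assms
proof (induction rule: trancl_induct)
  case (base v)
  then obtain j where j: "u \<le> d" "v \<le> d" "card (Xs u) = 2" "card (Xs v) = 2" "j \<le> d" "inum R u j v = 1"
    unfolding Crel_def by blast
  have r: "inum R v 0 v = 1" using Crel_refl j by blast
  show ?case unfolding chain_def
    apply (rule exI[of _ 1], rule exI[of _ "\<lambda>b. if b = 0 then u else v"],
        rule exI[of _ "\<lambda>b. if b = 0 then j else 0"], rule exI[of _ "\<lambda>b. v"])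
    using j r valency2 by (auto simp: le_Suc_eq)
next
  case (step y z)
  from step.hyps(2) obtain j where j: "y \<le> d" "z \<le> d" "card (Xs y) = 2" "card (Xs z) = 2" "j \<le> d" "inum R y j z = 1"
    unfolding Crel_def by blast
  from step.IH obtain a ii jj ll where a: "a \<ge> 1" and le: "\<forall>b\<le>a. ii b \<le> d \<and> jj b \<le> d \<and> ll b \<le> d"
    and e: "ii 0 = u" "ll a = y"
    and v: "\<forall>b\<le>a. valency d R (ii b) = 2 \<and> valency d R (ll b) = 2 \<and> inum R (ii b) (jj b) (ll b) = 1"
    and ch: "\<forall>c<a. ll c = ii (Suc c)"
    unfolding chain_def by blast
  show ?case unfolding chain_def
    apply (rule exI[of _ "Suc a"], rule exI[of _ "ii(Suc a := y)"],
        rule exI[of _ "jj(Suc a := j)"], rule exI[of _ "ll(Suc a := z)"])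
    using a le e v ch j valency2 by (auto simp: le_Suc_eq less_Suc_eq)
qed

lemma Crel_dom: assumes "(u, v) \<in> Crel\<^sup>+"
  shows "u \<le> d \<and> v \<le> d \<and> card (Xs u) = 2 \<and> card (Xs v) = 2"
proof -
  have "u \<in> Domain Crel" "v \<in> Range Crel" using assms
    by (metis Domain.DomainI trancl_domain, metis Range.intros trancl_range)
  then show ?thesis unfolding Crel_def by auto
qed

lemma U_eq: "calU d R = Crel\<^sup>+"
proof
  show "calU d R \<subseteq> Crel\<^sup>+"
  proof
    fix p assume "p \<in> calU d R"
    then obtain g h where p: "p = (g, h)" "g \<le> d" "h \<le> d"
      and c: "(valency d R g = 2 \<and> valency d R h = 2 \<and> card (cprod d R (conv_idx d R g) h) = 2) \<or> bad_pair d R g h"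
      unfolding calU_def by blast
    then show "p \<in> Crel\<^sup>+" using P_Crel bad_Crel valency2 by auto
  qed
next
  show "Crel\<^sup>+ \<subseteq> calU d R"
  proof
    fix p assume p: "p \<in> Crel\<^sup>+"
    obtain g h where gh: "p = (g, h)" by fastforce
    have dom: "g \<le> d \<and> h \<le> d \<and> card (Xs g) = 2 \<and> card (Xs h) = 2" using Crel_dom p gh by blast
    have ch: "chain g h" using Crel_chain p gh by blast
    show "p \<in> calU d R"
    proof (cases "card (cprod d R (conv_idx d R g) h) = 2")
      case True then show ?thesis using dom gh valency2 unfolding calU_def by auto
    next
      case False
      then have "card (cprod d R (conv_idx d R g) h) = 1" using card12 dom by blast
      then have "bad_pair d R g h" using ch unfolding bad_pair_def chain_def by blast
      then show ?thesis using dom gh unfolding calU_def by auto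
    qed
  qed
qed

lemma U_trans: "(a, b) \<in> calU d R \<Longrightarrow> (b, c) \<in> calU d R \<Longrightarrow> (a, c) \<in> calU d R"
  unfolding U_eq by (rule trancl_trans)

lemma U_dom: "(a, b) \<in> calU d R \<Longrightarrow> a \<le> d \<and> b \<le> d \<and> card (Xs a) = 2 \<and> card (Xs b) = 2"
  unfolding U_eq by (rule Crel_dom)


definition inV :: "('a \<Rightarrow> 'a \<Rightarrow> 'f::field) \<Rightarrow> bool" where
  "inV M \<longleftrightarrow> (\<forall>u v u' v'. cls u = cls u' \<longrightarrow> cls v = cls v' \<longrightarrow>
     ((cls u, cls v) \<in> calU d R \<longrightarrow> (lowp u = lowp v) = (lowp u' = lowp v')) \<longrightarrow> M u v = M u' v')"

lemma lowp_iff: "z \<in> Xs b \<Longrightarrow> b \<le> d \<Longrightarrow> lowp z \<longleftrightarrow> z = lo b"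
  unfolding lowp_def using cls_eq by simp

lemma diag_U: assumes "b \<le> d" "card (Xs b) = 2" shows "(b, b) \<in> calU d R"
proof -
  have "lo b \<noteq> hi b" using Xs2 assms by blast
  then have "((lo b, lo b) \<in> R 0) \<noteq> ((lo b, hi b) \<in> R 0)" using R0 by auto
  then show ?thesis using perm_U[OF assms(1,1) _ assms(2,2), of 0] by simp
qed

lemma eq_pattern: assumes "cls u = cls u'" "cls v = cls v'"
    "(cls u, cls v) \<in> calU d R \<longrightarrow> (lowp u = lowp v) = (lowp u' = lowp v')"
  shows "u = v \<longleftrightarrow> u' = v'"
proof (cases "cls u = cls v")
  case False then show ?thesis using assms by metis
next
  case True
  define b where "b = cls u"
  have b: "b \<le> d" "u \<in> Xs b" "v \<in> Xs b" "u' \<in> Xs b" "v' \<in> Xs b"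
    using cls True assms b_def by metis+
  show ?thesis
  proof (cases "card (Xs b) = 1")
    case True then have "Xs b = {lo b}" using Xs1 by blast
    then show ?thesis using b by auto
  next
    case False then have c2: "card (Xs b) = 2" using Xs_card b by blast
    then have X: "Xs b = {lo b, hi b}" "lo b \<noteq> hi b" using Xs2 by auto
    have "(b, b) \<in> calU d R" using diag_U b c2 by blast
    then have "(lowp u = lowp v) = (lowp u' = lowp v')" using assms True b_def by metis
    then have "(u = lo b \<longleftrightarrow> v = lo b) = (u' = lo b \<longleftrightarrow> v' = lo b)" using lowp_iff b by simp
    then show ?thesis using X b by auto
  qed
qed

lemma adj_inV: assumes e: "e \<le> d" shows "inV (adj R e)"
  unfolding inV_def adj_def
proof (intro allI impI)
  fix u v u' v'
  assume cu: "cls u = cls u'" and cv: "cls v = cls v'"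
    and cond: "(cls u, cls v) \<in> calU d R \<longrightarrow> (lowp u = lowp v) = (lowp u' = lowp v')"
  define a where "a = cls u"
  define b where "b = cls v"
  have ab: "a \<le> d" "b \<le> d" "u \<in> Xs a" "u' \<in> Xs a" "v \<in> Xs b" "v' \<in> Xs b"
    using cls cu cv a_def b_def by metis+
  have "(u, v) \<in> R e \<longleftrightarrow> (u', v') \<in> R e"
  proof (cases "card (Xs a) = 1")
    case True
    then have X: "Xs a = {lo a}" using Xs1 by blast
    then have "u = lo a" "u' = lo a" using ab by auto
    moreover have "card {w. w \<in> Xs a \<and> (w, v) \<in> R e} = card {w. w \<in> Xs a \<and> (w, v') \<in> R e}"
      using col_const ab e by blast
    ultimately show ?thesis unfolding X card_one_pred by (auto split: if_splits)
  next
    case False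
    then have a2: "card (Xs a) = 2" using Xs_card ab by blast
    show ?thesis
    proof (cases "card (Xs b) = 1")
      case True
      then have X: "Xs b = {lo b}" using Xs1 by blast
      then have "v = lo b" "v' = lo b" using ab by auto
      moreover have "card {w. w \<in> Xs b \<and> (u, w) \<in> R e} = card {w. w \<in> Xs b \<and> (u', w) \<in> R e}"
        using row_const ab e by blast
      ultimately show ?thesis unfolding X card_one_pred by (auto split: if_splits)
    next
      case False
      then have b2: "card (Xs b) = 2" using Xs_card ab by blast
      have A: "Xs a = {lo a, hi a}" "lo a \<noteq> hi a" and B: "Xs b = {lo b, hi b}" "lo b \<noteq> hi b"
        using Xs2 a2 b2 by auto
      have s: "((lo a, lo b) \<in> R e \<longleftrightarrow> (hi a, hi b) \<in> R e) \<and> ((lo a, hi b) \<in> R e \<longleftrightarrow> (hi a, lo b) \<in> R e)"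
        using sq ab e a2 b2 by blast
      have lu: "lowp u \<longleftrightarrow> u = lo a" "lowp u' \<longleftrightarrow> u' = lo a" "lowp v \<longleftrightarrow> v = lo b" "lowp v' \<longleftrightarrow> v' = lo b"
        using lowp_iff ab by auto
      show ?thesis
      proof (cases "(a, b) \<in> calU d R")
        case True
        then have "(u = lo a \<longleftrightarrow> v = lo b) = (u' = lo a \<longleftrightarrow> v' = lo b)" using cond lu a_def b_def by simp
        then show ?thesis using s A B ab by auto
      next
        case False
        then have "((lo a, lo b) \<in> R e) = ((lo a, hi b) \<in> R e)" using perm_U ab e a2 b2 by blast
        then show ?thesis using s A B ab by auto
      qed
    qed
  qed
  then show "(if (u, v) \<in> R e then 1 else 0) = (if (u', v') \<in> R e then 1 else 0)" by simp
qed

lemma mem_cls: "a \<le> d \<Longrightarrow> (x, u) \<in> R a \<longleftrightarrow> cls u = a"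
  using cls[of u] cls_eq[of a u] unfolding Xs_def by auto

lemma dual_inV: assumes "a \<le> d" shows "inV (dual_idem R x a)"
  unfolding inV_def dual_idem_def
proof (intro allI impI)
  fix u v u' v'
  assume h: "cls u = cls u'" "cls v = cls v'"
    "(cls u, cls v) \<in> calU d R \<longrightarrow> (lowp u = lowp v) = (lowp u' = lowp v')"
  have "u = v \<longleftrightarrow> u' = v'" by (rule eq_pattern[OF h])
  moreover have "(x, u) \<in> R a \<longleftrightarrow> (x, u') \<in> R a"
    using h(1) mem_cls[OF assms] by simp
  ultimately show "(if u = v \<and> (x, u) \<in> R a then 1 else 0) = (if u' = v' \<and> (x, u') \<in> R a then 1 else 0)"
    by simp
qed

lemma id_inV: "inV (\<lambda>u v. if u = v then (1::'f::field) else 0)"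
  unfolding inV_def
proof (intro allI impI)
  fix u v u' v'
  assume h: "cls u = cls u'" "cls v = cls v'"
    "(cls u, cls v) \<in> calU d R \<longrightarrow> (lowp u = lowp v) = (lowp u' = lowp v')"
  have "u = v \<longleftrightarrow> u' = v'" by (rule eq_pattern[OF h])
  then show "(if u = v then 1 else 0) = (if u' = v' then (1::'f) else 0)" by simp
qed

lemma inV_D: "inV M \<Longrightarrow> cls u = cls u' \<Longrightarrow> cls v = cls v' \<Longrightarrow>
     ((cls u, cls v) \<in> calU d R \<longrightarrow> (lowp u = lowp v) = (lowp u' = lowp v')) \<Longrightarrow> M u v = M u' v'"
  unfolding inV_def by blast

lemma add_inV: assumes "inV M" "inV N" shows "inV (M + N)"
  unfolding inV_def
proof (intro allI impI)
  fix u v u' v'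
  assume h: "cls u = cls u'" "cls v = cls v'"
    "(cls u, cls v) \<in> calU d R \<longrightarrow> (lowp u = lowp v) = (lowp u' = lowp v')"
  have "M u v = M u' v'" "N u v = N u' v'" using inV_D[OF assms(1) h] inV_D[OF assms(2) h] by auto
  then show "(M + N) u v = (M + N) u' v'" by simp
qed

lemma smult_inV: assumes "inV M" shows "inV (msmult c M)"
  unfolding inV_def
proof (intro allI impI)
  fix u v u' v'
  assume h: "cls u = cls u'" "cls v = cls v'"
    "(cls u, cls v) \<in> calU d R \<longrightarrow> (lowp u = lowp v) = (lowp u' = lowp v')"
  have "M u v = M u' v'" using inV_D[OF assms(1) h] by auto
  then show "msmult c M u v = msmult c M u' v'" by (simp add: msmult_def)
qed

definition oth where "oth z = (if z = lo (cls z) then hi (cls z) else lo (cls z))"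

lemma oth: assumes "card (Xs (cls z)) = 2"
  shows "cls (oth z) = cls z \<and> oth (oth z) = z \<and> (lowp (oth z) \<longleftrightarrow> \<not> lowp z)"
proof -
  define b where "b = cls z"
  have X: "Xs b = {lo b, hi b}" "lo b \<noteq> hi b" using Xs2 assms b_def by auto
  have b: "b \<le> d" "z \<in> Xs b" using cls b_def by auto
  have cl: "cls (lo b) = b" "cls (hi b) = b" using cls_eq b X by auto
  show ?thesis
  proof (cases "z = lo b")
    case True
    then show ?thesis unfolding oth_def lowp_def using cl X b_def by auto
  next
    case False
    then have "z = hi b" using X b by auto
    then show ?thesis unfolding oth_def lowp_def using cl X b_def by auto
  qed
qed

lemma mult_inV: assumes M: "inV M" and N: "inV N" shows "inV (mmult M N)"
  unfolding inV_def mmult_def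
proof (intro allI impI)
  fix u w u' w'
  assume cu: "cls u = cls u'" and cw: "cls w = cls w'"
    and cond: "(cls u, cls w) \<in> calU d R \<longrightarrow> (lowp u = lowp w) = (lowp u' = lowp w')"
  define a where "a = cls u"
  define c where "c = cls w"
  define sw where "sw b \<longleftrightarrow> ((a, b) \<in> calU d R \<and> lowp u \<noteq> lowp u') \<or>
      ((a, b) \<notin> calU d R \<and> (b, c) \<in> calU d R \<and> lowp w \<noteq> lowp w')" for b
  define \<sigma> where "\<sigma> z = (if sw (cls z) then oth z else z)" for z
  have sw2: "card (Xs b) = 2" if "sw b" for b using that U_dom unfolding sw_def by blast
  have scls: "cls (\<sigma> z) = cls z" for z unfolding \<sigma>_def using oth sw2 by auto
  have ss: "\<sigma> (\<sigma> z) = z" for z unfolding \<sigma>_def using oth sw2 scls[of z] unfolding \<sigma>_def by (auto split: if_splits)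
  have slow: "lowp (\<sigma> z) = (if sw (cls z) then \<not> lowp z else lowp z)" for z
    unfolding \<sigma>_def using oth sw2 by auto
  have eM: "M u v = M u' (\<sigma> v)" for v
  proof -
    have "(a, cls v) \<in> calU d R \<longrightarrow> (lowp u = lowp v) = (lowp u' = lowp (\<sigma> v))"
      unfolding slow sw_def by auto
    then show ?thesis using inV_D[OF M cu scls[of v, symmetric]] unfolding a_def by blast
  qed
  have eN: "N v w = N (\<sigma> v) w'" for v
  proof -
    have "(cls v, c) \<in> calU d R \<longrightarrow> (lowp v = lowp w) = (lowp (\<sigma> v) = lowp w')"
    proof (cases "(a, cls v) \<in> calU d R")
      case True
      then have "(a, c) \<in> calU d R" if "(cls v, c) \<in> calU d R" using U_trans that by blast
      then show ?thesis using cond True unfolding slow sw_def a_def c_def by auto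
    next
      case False
      then show ?thesis unfolding slow sw_def by auto
    qed
    then show ?thesis using inV_D[OF N scls[of v, symmetric] cw] unfolding c_def by blast
  qed
  show "(\<Sum>v\<in>UNIV. M u v * N v w) = (\<Sum>v\<in>UNIV. M u' v * N v w')"
    by (rule sum.reindex_bij_witness[of UNIV \<sigma> \<sigma>]) (auto simp: ss eM eN)
qed

lemma T_inV: assumes "M \<in> terwilliger d R x" shows "inV M"
  using assms unfolding terwilliger_def
proof (induction rule: gen_alg.induct)
  case (gen M) then show ?case using adj_inV dual_inV by blast
next
  case (one m) then show ?case using id_inV by simp
next
  case (add M N) then show ?case using add_inV by blast
next
  case (smult M c) then show ?case using smult_inV by blast
next
  case (mult M N) then show ?case using mult_inV by blast
qed


lemma sum_single_univ: fixes f :: "'a \<Rightarrow> 'f::field" assumes "\<And>w. w \<noteq> z \<Longrightarrow> f w = 0"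
  shows "(\<Sum>w\<in>UNIV. f w) = f z"
proof -
  have "(\<Sum>w\<in>UNIV. f w) = (\<Sum>w\<in>UNIV. if w = z then f z else 0)"
    by (rule sum.cong) (auto simp: assms)
  then show ?thesis by simp
qed

lemma sum_two_univ: fixes f :: "'a \<Rightarrow> 'f::field" assumes "p \<noteq> q" "\<And>w. w \<noteq> p \<Longrightarrow> w \<noteq> q \<Longrightarrow> f w = 0"
  shows "(\<Sum>w\<in>UNIV. f w) = f p + f q"
proof -
  have "(\<Sum>w\<in>UNIV. f w) = (\<Sum>w\<in>{p, q}. f w)"
    by (rule sum.mono_neutral_right) (auto simp: assms)
  then show ?thesis using assms(1) by simp
qed

definition blk :: "nat \<Rightarrow> nat \<Rightarrow> ('a \<Rightarrow> 'a \<Rightarrow> 'f::field) \<Rightarrow> 'a \<Rightarrow> 'a \<Rightarrow> 'f" where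
  "blk a b M = (\<lambda>u v. if u \<in> Xs a \<and> v \<in> Xs b then M u v else 0)"

lemma sandwich: "mmult (mmult (dual_idem R x a) N) (dual_idem R x b) = blk a b (N :: 'a \<Rightarrow> 'a \<Rightarrow> 'f::field)"
proof (intro ext)
  fix u v
  have L: "(\<Sum>z\<in>UNIV. dual_idem R x a u z * N z w) = (if u \<in> Xs a then N u w else 0)" for w
    by (subst sum_single_univ[of u]) (auto simp: dual_idem_def Xs_def)
  have "mmult (mmult (dual_idem R x a) N) (dual_idem R x b) u v
      = (\<Sum>w\<in>UNIV. (if u \<in> Xs a then N u w else 0) * dual_idem R x b w v)"
    unfolding mmult_def L by simp
  also have "\<dots> = (if u \<in> Xs a then N u v else 0) * dual_idem R x b v v"
    by (rule sum_single_univ) (auto simp: dual_idem_def)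
  also have "\<dots> = blk a b N u v" by (auto simp: dual_idem_def blk_def Xs_def)
  finally show "mmult (mmult (dual_idem R x a) N) (dual_idem R x b) u v = blk a b N u v" .
qed

definition JJ :: "nat \<Rightarrow> nat \<Rightarrow> 'a \<Rightarrow> 'a \<Rightarrow> 'f::field" where
  "JJ a b = mmult (mmult (dual_idem R x a) allones) (dual_idem R x b)"

lemma JJ_eq: "JJ a b = (\<lambda>u v. if u \<in> Xs a \<and> v \<in> Xs b then 1 else 0)"
  unfolding JJ_def sandwich blk_def allones_def by simp

lemma Bmat_eq: "(Bmat r R x i j :: 'a \<Rightarrow> 'a \<Rightarrow> 'f::field) =
   (\<lambda>u v. (if u = lo i \<and> v = lo j then 1 else 0) + (if u = hi i \<and> v = hi j then 1 else 0))"
  unfolding Bmat_def munit_def lo_def hi_def Xs_def by (simp add: fun_eq_iff)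

lemma Bmat_prod: assumes "card (Xs b) = 2"
  shows "mmult (Bmat r R x a b) (Bmat r R x b c) = (Bmat r R x a c :: 'a \<Rightarrow> 'a \<Rightarrow> 'f::field)"
proof (intro ext)
  fix u v
  have ne: "lo b \<noteq> hi b" using Xs2 assms by blast
  show "mmult (Bmat r R x a b) (Bmat r R x b c) u v = (Bmat r R x a c :: 'a \<Rightarrow> 'a \<Rightarrow> 'f) u v"
    unfolding mmult_def Bmat_eq
    by (subst sum_two_univ[OF ne]) (use ne in auto)
qed


abbreviation TT :: "('a \<Rightarrow> 'a \<Rightarrow> 'f::field) set" where "TT \<equiv> terwilliger d R x"

lemma T_adj: "c \<le> d \<Longrightarrow> adj R c \<in> TT" unfolding terwilliger_def by (rule gen_alg.gen) blast
lemma T_dual: "c \<le> d \<Longrightarrow> dual_idem R x c \<in> TT" unfolding terwilliger_def by (rule gen_alg.gen) blast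
lemma T_one: "(\<lambda>u v. if u = v then 1 else 0) \<in> TT" unfolding terwilliger_def by (rule gen_alg.one) (rule refl)
lemma T_add: "M \<in> TT \<Longrightarrow> N \<in> TT \<Longrightarrow> M + N \<in> TT" unfolding terwilliger_def by (rule gen_alg.add)
lemma T_smult: "M \<in> TT \<Longrightarrow> msmult c M \<in> TT" unfolding terwilliger_def by (rule gen_alg.smult)
lemma T_mult: "M \<in> TT \<Longrightarrow> N \<in> TT \<Longrightarrow> mmult M N \<in> TT" unfolding terwilliger_def by (rule gen_alg.mult)
lemma T_zero: "(0 :: 'a \<Rightarrow> 'a \<Rightarrow> 'f::field) \<in> TT"
proof -
  have e: "(0 :: 'a \<Rightarrow> 'a \<Rightarrow> 'f) = msmult 0 (\<lambda>u v. if u = v then 1 else 0)" by (simp add: msmult_def fun_eq_iff)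
  show ?thesis unfolding e by (rule T_smult[OF T_one])
qed
lemma T_sum: "finite A \<Longrightarrow> (\<And>c. c \<in> A \<Longrightarrow> f c \<in> TT) \<Longrightarrow> sum f A \<in> TT"
  by (induction A rule: finite_induct) (auto intro: T_zero T_add)
lemma T_diff: assumes "M \<in> TT" "N \<in> TT" shows "M - N \<in> TT"
proof -
  have "M + msmult (-1) N \<in> TT" using assms T_add T_smult by blast
  moreover have "M + msmult (-1) N = M - N" by (simp add: msmult_def fun_eq_iff)
  ultimately show ?thesis by simp
qed

lemma allones_sum: "(allones :: 'a \<Rightarrow> 'a \<Rightarrow> 'f::field) = (\<Sum>c\<in>{..d}. adj R c)"
proof (intro ext)
  fix u v
  obtain e where e: "e \<le> d" "(u, v) \<in> R e" by (rule idx)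
  have "(\<Sum>c\<in>{..d}. adj R c :: 'a \<Rightarrow> 'a \<Rightarrow> 'f) u v = (\<Sum>c\<in>{..d}. adj R c u v :: 'f)"
    by (simp add: sum_fun_apply2)
  also have "\<dots> = (\<Sum>c\<in>{..d}. if c = e then 1 else 0)"
    by (rule sum.cong) (use e part_un in \<open>auto simp: adj_def\<close>)
  also have "\<dots> = 1" using e by simp
  finally show "allones u v = (\<Sum>c\<in>{..d}. adj R c :: 'a \<Rightarrow> 'a \<Rightarrow> 'f) u v" by (simp add: allones_def)
qed

lemma T_allones: "(allones :: 'a \<Rightarrow> 'a \<Rightarrow> 'f::field) \<in> TT"
  unfolding allones_sum by (rule T_sum) (auto intro: T_adj)

lemma T_JJ: "a \<le> d \<Longrightarrow> b \<le> d \<Longrightarrow> (JJ a b :: 'a \<Rightarrow> 'a \<Rightarrow> 'f::field) \<in> TT"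
  unfolding JJ_def by (intro T_mult T_dual T_allones)

lemma Bmat_base: assumes "(a, b) \<in> Crel" shows "(Bmat r R x a b :: 'a \<Rightarrow> 'a \<Rightarrow> 'f::field) \<in> TT"
proof -
  obtain j where j: "a \<le> d" "b \<le> d" "card (Xs a) = 2" "card (Xs b) = 2" "j \<le> d" "inum R a j b = 1"
    using assms unfolding Crel_def by blast
  have A: "Xs a = {lo a, hi a}" "lo a \<noteq> hi a" and B: "Xs b = {lo b, hi b}" "lo b \<noteq> hi b"
    using Xs2 j by auto
  have "(x, lo b) \<in> R b" using B unfolding Xs_def by auto
  then have "1 = card {l. (x, l) \<in> R a \<and> (l, lo b) \<in> R j}"
    using inum_eq[OF j(1) j(5) j(2)] j(6) by simp
  also have "\<dots> = card {l. l \<in> Xs a \<and> (l, lo b) \<in> R j}" unfolding Xs_def by simp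
  finally have c1: "1 = (if (lo a, lo b) \<in> R j then 1 else 0) + (if (hi a, lo b) \<in> R j then 1 else (0::nat))"
    unfolding A(1) card_two_pred[OF A(2)] .
  have s: "((lo a, lo b) \<in> R j \<longleftrightarrow> (hi a, hi b) \<in> R j) \<and> ((lo a, hi b) \<in> R j \<longleftrightarrow> (hi a, lo b) \<in> R j)"
    using sq j by blast
  have S: "mmult (mmult (dual_idem R x a) (adj R j)) (dual_idem R x b) \<in> (TT :: ('a \<Rightarrow> 'a \<Rightarrow> 'f) set)"
    by (intro T_mult T_dual T_adj j)
  have lohi: "lo a \<in> Xs a" "hi a \<in> Xs a" "lo b \<in> Xs b" "hi b \<in> Xs b" using A B by auto
  show ?thesis
  proof (cases "(lo a, lo b) \<in> R j")
    case True
    then have f: "(hi a, lo b) \<notin> R j" "(lo a, hi b) \<notin> R j" "(hi a, hi b) \<in> R j" using c1 s by (auto split: if_splits)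
    have "mmult (mmult (dual_idem R x a) (adj R j)) (dual_idem R x b) = (Bmat r R x a b :: 'a \<Rightarrow> 'a \<Rightarrow> 'f)"
      unfolding sandwich blk_def Bmat_eq adj_def
    proof (intro ext)
      fix u v
      show "(if u \<in> Xs a \<and> v \<in> Xs b then if (u, v) \<in> R j then 1 else 0 else 0) =
         (if u = lo a \<and> v = lo b then 1 else 0) + (if u = hi a \<and> v = hi b then (1::'f) else 0)"
        using A B True f lohi by (cases "u \<in> Xs a \<and> v \<in> Xs b") auto
    qed
    then show ?thesis using S by simp
  next
    case False
    then have f: "(hi a, lo b) \<in> R j" "(lo a, hi b) \<in> R j" "(hi a, hi b) \<notin> R j" using c1 s by (auto split: if_splits)
    have "mmult (mmult (dual_idem R x a) (adj R j)) (dual_idem R x b) = JJ a b - (Bmat r R x a b :: 'a \<Rightarrow> 'a \<Rightarrow> 'f)"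
      unfolding sandwich blk_def Bmat_eq adj_def JJ_eq
    proof (intro ext)
      fix u v
      show "(if u \<in> Xs a \<and> v \<in> Xs b then if (u, v) \<in> R j then (1::'f) else 0 else 0) =
         ((\<lambda>u v. if u \<in> Xs a \<and> v \<in> Xs b then (1::'f) else 0) -
          (\<lambda>u v. (if u = lo a \<and> v = lo b then 1 else 0) + (if u = hi a \<and> v = hi b then 1 else 0))) u v"
        using A B False f lohi by (cases "u \<in> Xs a \<and> v \<in> Xs b") auto
    qed
    then have "(Bmat r R x a b :: 'a \<Rightarrow> 'a \<Rightarrow> 'f) = JJ a b - mmult (mmult (dual_idem R x a) (adj R j)) (dual_idem R x b)"
      by (simp add: algebra_simps)
    then show ?thesis using T_diff[OF T_JJ[OF j(1,2)] S] by simp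
  qed
qed

lemma Bmat_T: assumes "(a, b) \<in> Crel\<^sup>+" shows "(Bmat r R x a b :: 'a \<Rightarrow> 'a \<Rightarrow> 'f::field) \<in> TT"
  using assms
proof (induction rule: trancl_induct)
  case (base y) then show ?case by (rule Bmat_base)
next
  case (step y z)
  have "card (Xs y) = 2" using step.hyps(2) unfolding Crel_def by blast
  then have "mmult (Bmat r R x a y) (Bmat r R x y z) = (Bmat r R x a z :: 'a \<Rightarrow> 'a \<Rightarrow> 'f)" by (rule Bmat_prod)
  moreover have "mmult (Bmat r R x a y) (Bmat r R x y z) \<in> (TT :: ('a \<Rightarrow> 'a \<Rightarrow> 'f) set)"
    using T_mult step.IH Bmat_base[OF step.hyps(2)] by blast
  ultimately show ?case by simp
qed


definition Bas :: "('a \<Rightarrow> 'a \<Rightarrow> 'f::field) set" where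
  "Bas = {Bmat r R x i j | i j. (i, j) \<in> calU d R}
     \<union> {mmult (mmult (dual_idem R x y) allones) (dual_idem R x z) | y z. y \<le> d \<and> z \<le> d}"

lemma Bas_alt: "Bas = {Bmat r R x i j | i j. (i, j) \<in> calU d R} \<union> {JJ y z | y z. y \<le> d \<and> z \<le> d}"
  unfolding Bas_def JJ_def by simp

lemma Bas_T: "(Bas :: ('a \<Rightarrow> 'a \<Rightarrow> 'f::field) set) \<subseteq> TT"
  unfolding Bas_alt using Bmat_T T_JJ U_eq by blast

lemma span_T: "module.span (msmult :: 'f::field \<Rightarrow> _) Bas \<subseteq> TT"
proof -
  interpret m: module "msmult :: 'f \<Rightarrow> ('a \<Rightarrow> 'a \<Rightarrow> 'f) \<Rightarrow> _" by (rule msmult_module)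
  have "m.subspace (TT :: ('a \<Rightarrow> 'a \<Rightarrow> 'f) set)" by (rule m.subspaceI) (auto intro: T_zero T_add T_smult)
  then show ?thesis by (rule m.span_minimal[OF Bas_T])
qed

lemma blk_decomp: "(M :: 'a \<Rightarrow> 'a \<Rightarrow> 'f::field) = (\<Sum>a\<in>{..d}. \<Sum>b\<in>{..d}. blk a b M)"
proof (intro ext)
  fix u v
  have "(\<Sum>a\<in>{..d}. \<Sum>b\<in>{..d}. blk a b M) u v = (\<Sum>a\<in>{..d}. \<Sum>b\<in>{..d}. blk a b M u v)"
    by (simp add: sum_fun_apply2)
  also have "\<dots> = (\<Sum>a\<in>{..d}. if a = cls u then (\<Sum>b\<in>{..d}. if b = cls v then M u v else 0) else 0)"
  proof (rule sum.cong[OF refl])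
    fix a assume a: "a \<in> {..d}"
    show "(\<Sum>b\<in>{..d}. blk a b M u v) = (if a = cls u then (\<Sum>b\<in>{..d}. if b = cls v then M u v else 0) else 0)"
      using a mem_cls unfolding blk_def Xs_def by (auto intro!: sum.cong)
  qed
  also have "\<dots> = M u v" using cls by simp
  finally show "M u v = (\<Sum>a\<in>{..d}. \<Sum>b\<in>{..d}. blk a b M) u v" by simp
qed

lemma V_span: assumes inv: "inV (M :: 'a \<Rightarrow> 'a \<Rightarrow> 'f::field)" shows "M \<in> module.span msmult Bas"
proof -
  interpret m: module "msmult :: 'f \<Rightarrow> ('a \<Rightarrow> 'a \<Rightarrow> 'f) \<Rightarrow> _" by (rule msmult_module)
  have JB: "JJ a b \<in> (Bas :: ('a \<Rightarrow> 'a \<Rightarrow> 'f) set)" if "a \<le> d" "b \<le> d" for a b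
    unfolding Bas_alt using that by blast
  have BB: "Bmat r R x a b \<in> (Bas :: ('a \<Rightarrow> 'a \<Rightarrow> 'f) set)" if "(a, b) \<in> calU d R" for a b
    unfolding Bas_alt using that by blast
  have "blk a b M \<in> m.span Bas" if ab: "a \<le> d" "b \<le> d" for a b
  proof (cases "(a, b) \<in> calU d R")
    case True
    then have c2: "card (Xs a) = 2" "card (Xs b) = 2" using U_dom by auto
    have A: "Xs a = {lo a, hi a}" "lo a \<noteq> hi a" and B: "Xs b = {lo b, hi b}" "lo b \<noteq> hi b"
      using Xs2 c2 by auto
    have cl: "cls (lo a) = a" "cls (hi a) = a" "cls (lo b) = b" "cls (hi b) = b"
      using cls_eq ab A B by auto
    have lw: "lowp (lo a)" "\<not> lowp (hi a)" "lowp (lo b)" "\<not> lowp (hi b)"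
      unfolding lowp_def using cl A B by auto
    have e1: "M (hi a) (hi b) = M (lo a) (lo b)"
      by (rule inV_D[OF inv]) (use cl lw in auto)
    have e2: "M (hi a) (lo b) = M (lo a) (hi b)"
      by (rule inV_D[OF inv]) (use cl lw in auto)
    have "blk a b M = msmult (M (lo a) (lo b)) (Bmat r R x a b) + msmult (M (lo a) (hi b)) (JJ a b - Bmat r R x a b)"
    proof (intro ext)
      fix u v
      show "blk a b M u v = (msmult (M (lo a) (lo b)) (Bmat r R x a b) + msmult (M (lo a) (hi b)) (JJ a b - Bmat r R x a b)) u v"
        unfolding blk_def msmult_def Bmat_eq JJ_eq using A B e1 e2
        by (cases "u \<in> Xs a \<and> v \<in> Xs b") auto
    qed
    moreover have "msmult (M (lo a) (lo b)) (Bmat r R x a b) + msmult (M (lo a) (hi b)) (JJ a b - Bmat r R x a b) \<in> m.span Bas"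
      using BB[OF True] JB[OF ab] by (intro m.span_add m.span_scale m.span_diff m.span_base)
    ultimately show ?thesis by simp
  next
    case False
    have "blk a b M = msmult (M (lo a) (lo b)) (JJ a b)"
    proof (intro ext)
      fix u v
      have "M u v = M (lo a) (lo b)" if "u \<in> Xs a" "v \<in> Xs b"
        by (rule inV_D[OF inv]) (use that cls_eq ab lo_in False in auto)
      then show "blk a b M u v = msmult (M (lo a) (lo b)) (JJ a b) u v"
        unfolding blk_def msmult_def JJ_eq by auto
    qed
    moreover have "msmult (M (lo a) (lo b)) (JJ a b) \<in> m.span Bas"
      using JB[OF ab] by (intro m.span_scale m.span_base)
    ultimately show ?thesis by simp
  qed
  then have "(\<Sum>a\<in>{..d}. \<Sum>b\<in>{..d}. blk a b M) \<in> m.span Bas"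
    by (intro m.span_sum) auto
  then show ?thesis using blk_decomp[of M] by simp
qed

lemma sum_single_set: assumes "finite t" "v \<in> t" "\<And>w. w \<in> t \<Longrightarrow> w \<noteq> v \<Longrightarrow> g w = (0::'f::field)"
  shows "sum g t = g v"
proof -
  have "sum g t = (\<Sum>w\<in>t. if w = v then g v else 0)" by (rule sum.cong) (auto simp: assms)
  then show ?thesis using assms by simp
qed

lemma indep: "\<not> module.dependent (msmult :: 'f::field \<Rightarrow> _) Bas"
proof -
  interpret m: module "msmult :: 'f \<Rightarrow> ('a \<Rightarrow> 'a \<Rightarrow> 'f) \<Rightarrow> _" by (rule msmult_module)
  show ?thesis unfolding m.dependent_explicit
  proof
    assume "\<exists>t c. finite t \<and> t \<subseteq> Bas \<and> (\<Sum>v\<in>t. msmult (c v) v) = 0 \<and> (\<exists>v\<in>t. c v \<noteq> (0::'f))"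
    then obtain t c v0 where fin: "finite t" and sub: "t \<subseteq> Bas" and s0: "(\<Sum>v\<in>t. msmult (c v) v) = 0"
      and v0: "v0 \<in> t" "c v0 \<noteq> (0::'f)" by blast
    have F: "(\<Sum>w\<in>t. c w * w p q) = 0" for p q
    proof -
      have "(\<Sum>v\<in>t. msmult (c v) v) p q = 0" using s0 by simp
      then show ?thesis by (simp add: sum_fun_apply2 msmult_def)
    qed
    have sub': "w \<in> t \<Longrightarrow> (\<exists>a b. (a, b) \<in> calU d R \<and> w = Bmat r R x a b) \<or> (\<exists>a b. a \<le> d \<and> b \<le> d \<and> w = JJ a b)" for w
      using sub unfolding Bas_alt by blast
    have JJ0: "JJ a' b' p q \<noteq> (0::'f) \<Longrightarrow> a' \<le> d \<Longrightarrow> b' \<le> d \<Longrightarrow> a' = cls p \<and> b' = cls q" for a' b' p q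
      unfolding JJ_eq using cls_eq by (auto split: if_splits)
    have BB0: "Bmat r R x a' b' p q \<noteq> (0::'f) \<Longrightarrow> (a', b') \<in> calU d R \<Longrightarrow>
        a' = cls p \<and> b' = cls q \<and> ((p = lo a' \<and> q = lo b') \<or> (p = hi a' \<and> q = hi b'))" for a' b' p q
    proof -
      assume nz: "Bmat r R x a' b' p q \<noteq> (0::'f)" and U: "(a', b') \<in> calU d R"
      then have c2: "a' \<le> d" "b' \<le> d" "card (Xs a') = 2" "card (Xs b') = 2" using U_dom by auto
      have "(p = lo a' \<and> q = lo b') \<or> (p = hi a' \<and> q = hi b')" using nz unfolding Bmat_eq by (auto split: if_splits)
      moreover have "lo a' \<in> Xs a'" "hi a' \<in> Xs a'" "lo b' \<in> Xs b'" "hi b' \<in> Xs b'" using Xs2 c2 by auto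
      ultimately show ?thesis using cls_eq c2 by auto
    qed
    have cJ: "c (JJ a b) = 0" if ab: "a \<le> d" "b \<le> d" "JJ a b \<in> t" for a b
    proof -
      define p where "p = lo a"
      define q where "q = (if (a, b) \<in> calU d R then hi b else lo b)"
      have pq: "p \<in> Xs a" "q \<in> Xs b" unfolding p_def q_def using lo_in ab U_dom hi_in by auto
      have clp: "cls p = a" "cls q = b" using pq cls_eq ab by auto
      have z: "c w * w p q = 0" if w: "w \<in> t" "w \<noteq> JJ a b" for w
      proof -
        have "w p q = 0"
        proof (rule ccontr)
          assume nz: "w p q \<noteq> 0"
          from sub'[OF w(1)] show False
          proof
            assume "\<exists>a' b'. (a', b') \<in> calU d R \<and> w = Bmat r R x a' b'"
            then obtain a' b' where U: "(a', b') \<in> calU d R" and we: "w = Bmat r R x a' b'" by blast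
            have h: "a' = a \<and> b' = b \<and> ((p = lo a' \<and> q = lo b') \<or> (p = hi a' \<and> q = hi b'))"
              using BB0[OF nz[unfolded we] U] clp by auto
            then have U2: "(a, b) \<in> calU d R" using U by simp
            then have "q = hi b" unfolding q_def by simp
            moreover have "lo a \<noteq> hi a" "lo b \<noteq> hi b" using Xs2 U_dom[OF U2] by auto
            ultimately show False using h unfolding p_def by auto
          next
            assume "\<exists>a' b'. a' \<le> d \<and> b' \<le> d \<and> w = JJ a' b'"
            then obtain a' b' where "a' \<le> d" "b' \<le> d" "w = JJ a' b'" by blast
            then show False using JJ0[of a' b' p q] nz clp w(2) by auto
          qed
        qed
        then show ?thesis by simp
      qed
      have "0 = (\<Sum>w\<in>t. c w * w p q)" using F by simp
      also have "\<dots> = c (JJ a b) * JJ a b p q" by (rule sum_single_set[OF fin ab(3)]) (use z in auto)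
      also have "\<dots> = c (JJ a b)" unfolding JJ_eq using pq by simp
      finally show ?thesis by simp
    qed
    have cB: "c (Bmat r R x a b) = 0" if ab: "(a, b) \<in> calU d R" "Bmat r R x a b \<in> t" for a b
    proof -
      have c2: "a \<le> d" "b \<le> d" "card (Xs a) = 2" "card (Xs b) = 2" using U_dom ab by auto
      define p where "p = lo a"
      define q where "q = lo b"
      have pq: "p \<in> Xs a" "q \<in> Xs b" unfolding p_def q_def using lo_in c2 by auto
      have clp: "cls p = a" "cls q = b" using pq cls_eq c2 by auto
      have ne: "lo a \<noteq> hi a" using Xs2 c2 by auto
      have z: "c w * w p q = 0" if w: "w \<in> t" "w \<noteq> Bmat r R x a b" for w
      proof (cases "w p q = 0")
        case True then show ?thesis by simp
      next
        case nz: False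
        from sub'[OF w(1)] show ?thesis
        proof
          assume "\<exists>a' b'. (a', b') \<in> calU d R \<and> w = Bmat r R x a' b'"
          then obtain a' b' where U: "(a', b') \<in> calU d R" and we: "w = Bmat r R x a' b'" by blast
          have "a' = a \<and> b' = b" using BB0[OF nz[unfolded we] U] clp by simp
          then show ?thesis using we w(2) by simp
        next
          assume "\<exists>a' b'. a' \<le> d \<and> b' \<le> d \<and> w = JJ a' b'"
          then obtain a' b' where ab': "a' \<le> d" "b' \<le> d" "w = JJ a' b'" by blast
          then have "a' = a \<and> b' = b" using JJ0[of a' b' p q] nz clp by auto
          then have "c w = 0" using cJ ab' w(1) by auto
          then show ?thesis by simp
        qed
      qed
      have "0 = (\<Sum>w\<in>t. c w * w p q)" using F by simp
      also have "\<dots> = c (Bmat r R x a b) * Bmat r R x a b p q" by (rule sum_single_set[OF fin ab(2)]) (use z in auto)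
      also have "\<dots> = c (Bmat r R x a b)" unfolding Bmat_eq p_def q_def using ne by simp
      finally show ?thesis by simp
    qed
    from sub'[OF v0(1)] show False using cJ cB v0 by blast
  qed
qed

theorem main: "\<not> module.dependent (msmult :: 'f::field \<Rightarrow> _) Bas \<and> module.span (msmult :: 'f::field \<Rightarrow> _) Bas = TT"
proof
  show "\<not> module.dependent (msmult :: 'f::field \<Rightarrow> _) Bas" by (rule indep)
  show "module.span (msmult :: 'f::field \<Rightarrow> _) Bas = TT"
  proof
    show "module.span (msmult :: 'f::field \<Rightarrow> _) Bas \<subseteq> TT" by (rule span_T)
    show "TT \<subseteq> module.span (msmult :: 'f::field \<Rightarrow> _) Bas"
      using T_inV V_span by blast
  qed
qed

end

theorem corollary4p6:
  fixes d :: nat and R :: "nat \<Rightarrow> ('a::finite \<times> 'a) set" and x :: 'a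
    and r :: "'a rel"
  assumes "is_scheme d R"
    and "quasi_thin d R"
    and "linear_order_on UNIV r"
  shows "\<not> module.dependent (msmult :: 'f::field \<Rightarrow> _)
            ({Bmat r R x i j | i j. (i, j) \<in> calU d R}
             \<union> {mmult (mmult (dual_idem R x y) allones) (dual_idem R x z) | y z. y \<le> d \<and> z \<le> d})
       \<and> module.span (msmult :: 'f::field \<Rightarrow> _)
            ({Bmat r R x i j | i j. (i, j) \<in> calU d R}
             \<union> {mmult (mmult (dual_idem R x y) allones) (dual_idem R x z) | y z. y \<le> d \<and> z \<le> d})
         = terwilliger d R x"
proof -
  interpret q: qts d R x r using assms by (rule qts.intro)
  show ?thesis using q.main unfolding q.Bas_def .
qed

end
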